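(* There exists an instance of $P_n\,|\,\mathrm{conc}, p_j=1\,|\,WC_{\max}$ whose conflict graph $G$ has treewidth $1$ and in which every optimal schedule has makespan $C_{\max}=\log n+1$, where $n$ is the number of jobs.
   Context: In $P_n\,|\,\mathrm{conc}, p_j=1\,|\,WC_{\max}$, jobs $\{1,\dots,n\}$ have processing time $1$, release time $0$ and integer weights $w_j$; there is a conflict graph $G$ on the jobs, and a schedule $C:\{1,\dots,n\}\to\mathbb{N}_{\ge1}$ is feasible iff $C(i)\ne C(j)$ for every edge $\{i,j\}$ of $G$. The objective $WC_{\max}=\max_j w_jC_j$ is minimized; $C_{\max}=\max_j C_j$. $\log$ is base $2$. *)

theory Defs
  imports Complex_Main
begin

definition simple_graph :: "'a set \<Rightarrow> 'a set set \<Rightarrow> bool" where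
  "simple_graph V E \<longleftrightarrow> finite V \<and> (\<forall>e\<in>E. e \<subseteq> V \<and> card e = 2)"

definition connected_graph :: "'a set \<Rightarrow> 'a set set \<Rightarrow> bool" where
  "connected_graph V E \<longleftrightarrow>
     (\<forall>u\<in>V. \<forall>v\<in>V. (\<lambda>x y. {x, y} \<in> E)\<^sup>*\<^sup>* u v)"

definition is_tree :: "'a set \<Rightarrow> 'a set set \<Rightarrow> bool" where
  "is_tree I F \<longleftrightarrow> simple_graph I F \<and> I \<noteq> {} \<and> connected_graph I F
     \<and> card F = card I - 1"

definition tree_decomposition ::
  "'a set \<Rightarrow> 'a set set \<Rightarrow> nat set \<Rightarrow> nat set set \<Rightarrow> (nat \<Rightarrow> 'a set) \<Rightarrow> bool" where
  "tree_decomposition V E I F B \<longleftrightarrow>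
     is_tree I F
     \<and> (\<forall>i\<in>I. B i \<subseteq> V)
     \<and> (\<forall>v\<in>V. \<exists>i\<in>I. v \<in> B i)
     \<and> (\<forall>e\<in>E. \<exists>i\<in>I. e \<subseteq> B i)
     \<and> (\<forall>v\<in>V. connected_graph {i\<in>I. v \<in> B i} {f\<in>F. f \<subseteq> {i\<in>I. v \<in> B i}})"

definition decomposition_width :: "nat set \<Rightarrow> (nat \<Rightarrow> 'a set) \<Rightarrow> nat" where
  "decomposition_width I B = Max ((\<lambda>i. card (B i)) ` I) - 1"

definition treewidth :: "'a set \<Rightarrow> 'a set set \<Rightarrow> nat" where
  "treewidth V E = (LEAST w. \<exists>I F B. tree_decomposition V E I F B \<and> decomposition_width I B = w)"

definition feasible_schedule :: "nat \<Rightarrow> nat set set \<Rightarrow> (nat \<Rightarrow> nat) \<Rightarrow> bool" where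
  "feasible_schedule n E C \<longleftrightarrow>
     (\<forall>j\<in>{1..n}. C j \<ge> 1) \<and> (\<forall>e\<in>E. \<forall>i\<in>e. \<forall>j\<in>e. i \<noteq> j \<longrightarrow> C i \<noteq> C j)"

definition WCmax :: "nat \<Rightarrow> (nat \<Rightarrow> int) \<Rightarrow> (nat \<Rightarrow> nat) \<Rightarrow> int" where
  "WCmax n w C = Max ((\<lambda>j. w j * int (C j)) ` {1..n})"

definition Cmax :: "nat \<Rightarrow> (nat \<Rightarrow> nat) \<Rightarrow> nat" where
  "Cmax n C = Max (C ` {1..n})"

definition optimal_schedule :: "nat \<Rightarrow> (nat \<Rightarrow> int) \<Rightarrow> nat set set \<Rightarrow> (nat \<Rightarrow> nat) \<Rightarrow> bool" where
  "optimal_schedule n w E C \<longleftrightarrow> feasible_schedule n E C \<and>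
     (\<forall>C'. feasible_schedule n E C' \<longrightarrow> WCmax n w C \<le> WCmax n w C')"

end

theory Submission
  imports Defs
begin

function tz :: "nat \<Rightarrow> nat" where
  "tz j = (if j = 0 \<or> odd j then 0 else Suc (tz (j div 2)))"
  by auto
termination by (relation "measure id") auto

declare tz.simps[simp del]

lemma tz_odd: "odd m \<Longrightarrow> tz m = 0"
  by (subst tz.simps) auto

lemma tz_mult: "odd m \<Longrightarrow> tz (2 ^ t * m) = t"
proof (induction t)
  case 0 then show ?case by (simp add: tz_odd)
next
  case (Suc t)
  have "2 ^ Suc t * m \<noteq> 0" "even (2 ^ Suc t * m)" using Suc.prems by (auto intro!: Nat.gr0I)
  moreover have "2 ^ Suc t * m div 2 = 2 ^ t * m" by simp
  ultimately show ?case using Suc by (subst tz.simps) simp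
qed

lemma tz_decomp: "j > 0 \<Longrightarrow> \<exists>m. odd m \<and> j = 2 ^ tz j * m"
proof (induction j rule: tz.induct)
  case (1 j)
  show ?case
  proof (cases "odd j")
    case True then show ?thesis by (auto simp: tz_odd)
  next
    case False
    then have j2: "j div 2 > 0" using 1(2) by auto
    from 1(1)[OF _ j2] 1(2) False obtain m where "odd m" "j div 2 = 2 ^ tz (j div 2) * m" by auto
    moreover have "tz j = Suc (tz (j div 2))" using False 1(2) by (subst tz.simps) simp
    ultimately show ?thesis using False by (intro exI[of _ m]) auto
  qed
qed

lemma pow_tz_le: "j > 0 \<Longrightarrow> 2 ^ tz j \<le> j"
proof -
  assume "j > 0"
  then obtain m where "odd m" "j = 2 ^ tz j * m" using tz_decomp by blast
  moreover have "m \<ge> 1" using \<open>odd m\<close> by (cases m) auto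
  ultimately show ?thesis by (metis mult_le_mono2 nat_mult_1_right)
qed

lemma tz_le_k: "0 < j \<Longrightarrow> j \<le> 2 ^ k \<Longrightarrow> tz j \<le> k"
  using pow_tz_le[of j] by (metis le_trans power_le_imp_le_exp one_less_numeral_iff semiring_norm(76))

lemma par_up:
  assumes "0 < j" "j < 2 ^ k"
  shows "j + 2 ^ tz j \<le> 2 ^ k \<and> tz j < tz (j + 2 ^ tz j)"
proof -
  obtain m where m: "odd m" "j = 2 ^ tz j * m" using tz_decomp assms(1) by blast
  define t where "t = tz j"
  have jt: "j = 2 ^ t * m" using m t_def by simp
  obtain m' where m': "m + 1 = 2 * m'" using m(1) by (metis dvd_def odd_even_add odd_one)
  have "m' > 0" using m' by auto
  then obtain o' where o': "odd o'" "m' = 2 ^ tz m' * o'" using tz_decomp by blast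
  have "j + 2 ^ t = 2 ^ (t + 1 + tz m') * o'"
    proof -
    have "j + 2 ^ t = 2 ^ t * (m + 1)" using jt by simp
    also have "\<dots> = 2 ^ t * 2 * 2 ^ tz m' * o'" using m' o' by (metis mult.assoc)
    finally show ?thesis by (simp add: power_add)
  qed
  then have tzp: "tz (j + 2 ^ t) = t + 1 + tz m'" using tz_mult[OF o'(1), of "t + 1 + tz m'"] by simp
  have "2 ^ t \<le> j" using pow_tz_le assms(1) t_def by simp
  then have "t < k" using assms(2) by (metis le_less_trans nat_power_less_imp_less zero_less_numeral)
  then have k: "2 ^ k = 2 ^ t * (2::nat) ^ (k - t)" by (simp add: power_add[symmetric])
  have "2 ^ t * m < 2 ^ t * 2 ^ (k - t)" using jt k assms(2) by simp
  then have "m < 2 ^ (k - t)" by simp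
  then have "m + 1 \<le> 2 ^ (k - t)" by simp
  then have "2 ^ t * (m + 1) \<le> 2 ^ t * 2 ^ (k - t)" by (rule mult_le_mono2)
  then have "j + 2 ^ t \<le> 2 ^ k" using jt k by (simp add: algebra_simps)
  then show ?thesis using tzp t_def by simp
qed

lemma child:
  assumes "0 < v" "v \<le> 2 ^ k" "i < tz v"
  shows "0 < v - 2 ^ i \<and> v - 2 ^ i < 2 ^ k \<and> tz (v - 2 ^ i) = i \<and> (v - 2 ^ i) + 2 ^ tz (v - 2 ^ i) = v"
proof -
  obtain m where m: "odd m" "v = 2 ^ tz v * m" using tz_decomp assms(1) by blast
  define t where "t = tz v"
  define q where "q = 2 ^ (t - i) * m"
  have vq: "v = 2 ^ i * q" using m t_def assms(3) by (simp add: q_def mult.assoc[symmetric] power_add[symmetric])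
  have qe: "even q" using assms(3) t_def by (simp add: q_def)
  have q0: "q > 0" using vq assms(1) by (cases q) auto
  have c: "v - 2 ^ i = 2 ^ i * (q - 1)" using vq by (simp add: right_diff_distrib')
  have "odd (q - 1)" using qe q0 by simp
  then have tzc: "tz (v - 2 ^ i) = i" using c tz_mult by simp
  have "q \<ge> 2" using qe q0 by presburger
  then have "0 < v - 2 ^ i" using c by simp
  moreover have "v - 2 ^ i < 2 ^ k" using assms(1,2) by (metis diff_less le_trans not_le zero_less_numeral zero_less_power)
  moreover have "(v - 2 ^ i) + 2 ^ i = v" proof -
    have "2 ^ i * 1 \<le> 2 ^ i * q" using q0 by (intro mult_le_mono2) simp
    then have "2 ^ i \<le> v" using vq by simp
    then show ?thesis by simp
  qed
  ultimately show ?thesis using tzc by simp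
qed

definition par :: "nat \<Rightarrow> nat" where "par j = j + 2 ^ tz j"

definition Eb :: "nat \<Rightarrow> nat set set" where "Eb n = (\<lambda>j. {j, par j}) ` {1..<n}"

lemma par_gt: "j < par j" by (simp add: par_def)

lemma par_props: "0 < j \<Longrightarrow> j < 2 ^ k \<Longrightarrow> par j \<le> 2 ^ k \<and> tz j < tz (par j)"
  using par_up by (simp add: par_def)

lemma rel_sym:
  assumes "(\<lambda>x y. {x, y} \<in> E)\<^sup>*\<^sup>* a b"
  shows "(\<lambda>x y. {x, y} \<in> E)\<^sup>*\<^sup>* b a"
  using assms
proof (induction rule: rtranclp_induct)
  case base then show ?case by simp
next
  case (step y z)
  have "{z, y} \<in> E" using step(2) by (simp add: insert_commute)
  then show ?case using step(3) by (rule converse_rtranclp_into_rtranclp[where r="\<lambda>x y. {x, y} \<in> E"])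
qed

lemma conn_star:
  assumes "\<forall>u\<in>V. (\<lambda>x y. {x, y} \<in> E)\<^sup>*\<^sup>* u c"
  shows "connected_graph V E"
  unfolding connected_graph_def
proof (intro ballI)
  fix u v assume "u \<in> V" "v \<in> V"
  then have "(\<lambda>x y. {x, y} \<in> E)\<^sup>*\<^sup>* u c" "(\<lambda>x y. {x, y} \<in> E)\<^sup>*\<^sup>* c v"
    using assms rel_sym[of E v c] by auto
  then show "(\<lambda>x y. {x, y} \<in> E)\<^sup>*\<^sup>* u v" by (rule rtranclp_trans)
qed

lemma reach:
  assumes "n = 2 ^ k" "j \<in> {1..n}"
  shows "(\<lambda>x y. {x, y} \<in> Eb n)\<^sup>*\<^sup>* j n"
  using assms(2)
proof (induction "n - j" arbitrary: j rule: less_induct)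
  case less
  show ?case
  proof (cases "j = n")
    case True then show ?thesis by simp
  next
    case False
    then have jn: "j < n" using less.prems by simp
    have pj: "par j \<le> n" "j < par j" using par_props[of j k] par_gt[of j] jn less.prems assms(1) by auto
    then have "(\<lambda>x y. {x, y} \<in> Eb n)\<^sup>*\<^sup>* (par j) n" using less.hyps[of "par j"] less.prems by auto
    moreover have "{j, par j} \<in> Eb n" unfolding Eb_def using jn less.prems by auto
    ultimately show ?thesis by (rule converse_rtranclp_into_rtranclp[rotated])
  qed
qed

lemma Eb_simple:
  assumes "n = 2 ^ k"
  shows "simple_graph {1..n} (Eb n)"
  unfolding simple_graph_def
proof (intro conjI ballI)
  fix e assume "e \<in> Eb n"
  then obtain j where j: "j \<in> {1..<n}" "e = {j, par j}" unfolding Eb_def by auto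
  have "par j \<le> n" using par_props[of j k] j assms by auto
  then show "e \<subseteq> {1..n}" using j par_gt[of j] by auto
  show "card e = 2" using j par_gt[of j] by auto
qed simp

lemma Eb_card:
  assumes "n = 2 ^ k"
  shows "card (Eb n) = n - 1"
proof -
  have "inj_on (\<lambda>j. {j, par j}) {1..<n}"
  proof (rule inj_onI)
    fix a b assume "a \<in> {1..<n}" "b \<in> {1..<n}" "{a, par a} = {b, par b}"
    then show "a = b" using par_gt[of a] par_gt[of b] by (auto simp: doubleton_eq_iff)
  qed
  then show ?thesis unfolding Eb_def by (simp add: card_image)
qed

lemma Eb_tree:
  assumes "n = 2 ^ k"
  shows "is_tree {1..n} (Eb n)"
  unfolding is_tree_def
  using Eb_simple[OF assms] Eb_card[OF assms] conn_star[of "{1..n}" "Eb n" n] reach[OF assms]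
  using assms by auto

definition Bb :: "nat \<Rightarrow> nat \<Rightarrow> nat set" where
  "Bb n j = (if j < n then {j, par j} else {j})"

lemma Bb_decomp:
  assumes "n = 2 ^ k"
  shows "tree_decomposition {1..n} (Eb n) {1..n} (Eb n) (Bb n)"
  unfolding tree_decomposition_def
proof (intro conjI ballI)
  show "is_tree {1..n} (Eb n)" using Eb_tree[OF assms] .
next
  fix i assume i: "i \<in> {1..n}"
  show "Bb n i \<subseteq> {1..n}" using par_props[of i k] par_gt[of i] i assms by (auto simp: Bb_def)
next
  fix v assume "v \<in> {1..n}"
  then show "\<exists>i\<in>{1..n}. v \<in> Bb n i" by (intro bexI[of _ v]) (auto simp: Bb_def)
next
  fix e assume "e \<in> Eb n"
  then obtain j where j: "j \<in> {1..<n}" "e = {j, par j}" unfolding Eb_def by auto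
  then show "\<exists>i\<in>{1..n}. e \<subseteq> Bb n i" by (intro bexI[of _ j]) (auto simp: Bb_def)
next
  fix v assume v: "v \<in> {1..n}"
  define S where "S = {i \<in> {1..n}. v \<in> Bb n i}"
  have vS: "v \<in> S" using v by (auto simp: S_def Bb_def)
  have "\<forall>u\<in>S. (\<lambda>x y. {x, y} \<in> {f \<in> Eb n. f \<subseteq> S})\<^sup>*\<^sup>* u v"
  proof
    fix u assume u: "u \<in> S"
    show "(\<lambda>x y. {x, y} \<in> {f \<in> Eb n. f \<subseteq> S})\<^sup>*\<^sup>* u v"
    proof (cases "u = v")
      case True then show ?thesis by simp
    next
      case False
      then have "u < n" "v = par u" "u \<in> {1..n}" using u by (auto simp: S_def Bb_def split: if_splits)
      then have "{u, par u} \<in> Eb n" unfolding Eb_def by (intro image_eqI[where x=u]) auto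
      moreover have "{u, v} \<subseteq> S" using u vS by blast
      ultimately have "{u, v} \<in> {f \<in> Eb n. f \<subseteq> S}" using \<open>v = par u\<close> by blast
      then show ?thesis by (rule r_into_rtranclp[where r="\<lambda>x y. {x, y} \<in> {f \<in> Eb n. f \<subseteq> S}"])
    qed
  qed
  then have "connected_graph S {f \<in> Eb n. f \<subseteq> S}" by (rule conn_star)
  then show "connected_graph {i \<in> {1..n}. v \<in> Bb n i} {f \<in> Eb n. f \<subseteq> {i \<in> {1..n}. v \<in> Bb n i}}"
    unfolding S_def .
qed

lemma Bb_width:
  assumes "n = 2 ^ k" "k \<ge> 1"
  shows "decomposition_width {1..n} (Bb n) = 1"
proof -
  have n2: "n \<ge> 2" using assms by (metis one_le_numeral power_increasing power_one_right)
  have "Max ((\<lambda>i. card (Bb n i)) ` {1..n}) = 2"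
  proof (rule Max_eqI)
    fix y assume "y \<in> (\<lambda>i. card (Bb n i)) ` {1..n}"
    then show "y \<le> 2" by (auto simp: Bb_def card_insert_if)
  next
    have "card (Bb n 1) = 2" using n2 par_gt[of 1] by (auto simp: Bb_def)
    then show "2 \<in> (\<lambda>i. card (Bb n i)) ` {1..n}" using n2 by force
  qed simp
  then show ?thesis by (simp add: decomposition_width_def)
qed

lemma width_lower:
  assumes "tree_decomposition V E I F B" "simple_graph V E" "e \<in> E"
  shows "decomposition_width I B \<ge> 1"
proof -
  obtain i where i: "i \<in> I" "e \<subseteq> B i" using assms(1,3) unfolding tree_decomposition_def by blast
  have "finite V" "card e = 2" "B i \<subseteq> V" using assms i unfolding simple_graph_def tree_decomposition_def by auto
  then have "card (B i) \<ge> 2" using i(2) by (metis card_mono finite_subset)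
  moreover have "finite I" using assms(1) unfolding tree_decomposition_def is_tree_def simple_graph_def by auto
  ultimately have "Max ((\<lambda>i. card (B i)) ` I) \<ge> 2" using i(1) by (meson Max_ge finite_imageI image_eqI le_trans)
  then show ?thesis by (simp add: decomposition_width_def)
qed

lemma Eb_treewidth:
  assumes "n = 2 ^ k" "k \<ge> 1"
  shows "treewidth {1..n} (Eb n) = 1"
  unfolding treewidth_def
proof (rule Least_equality)
  show "\<exists>I F B. tree_decomposition {1..n} (Eb n) I F B \<and> decomposition_width I B = 1"
    using Bb_decomp[OF assms(1)] Bb_width[OF assms] by blast
next
  fix y assume "\<exists>I F B. tree_decomposition {1..n} (Eb n) I F B \<and> decomposition_width I B = y"
  then obtain I F B where d: "tree_decomposition {1..n} (Eb n) I F B" "decomposition_width I B = y" by blast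
  have n2: "1 < n" using assms by (metis one_less_numeral_iff one_less_power semiring_norm(76) le_less_trans less_one not_le)
  then have "{1, par 1} \<in> Eb n" by (auto simp: Eb_def)
  then show "1 \<le> y" using width_lower[OF d(1) Eb_simple[OF assms(1)]] d(2) by blast
qed

definition wb :: "nat \<Rightarrow> nat \<Rightarrow> int" where
  "wb k j = int (fact (Suc k) div Suc (tz j))"

lemma wb_props:
  assumes "n = 2 ^ k" "j \<in> {1..n}"
  shows "wb k j \<ge> 1 \<and> (\<forall>c::nat. wb k j * int c \<le> int (fact (Suc k)) \<longleftrightarrow> c \<le> Suc (tz j))"
proof -
  have "tz j \<le> k" using tz_le_k[of j k] assms by auto
  then have d: "Suc (tz j) dvd fact (Suc k)" by (intro dvd_fact) auto
  define a where "a = fact (Suc k) div Suc (tz j)"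
  have aeq: "a * Suc (tz j) = fact (Suc k)" unfolding a_def using d by (rule dvd_div_mult_self)
  have "fact (Suc k) > (0::nat)" by simp
  then have a0: "a > 0" using aeq by (cases a) auto
  have wa: "wb k j = int a" unfolding wb_def a_def ..
  have "\<forall>c::nat. wb k j * int c \<le> int (fact (Suc k)) \<longleftrightarrow> c \<le> Suc (tz j)"
  proof
    fix c :: nat
    have "wb k j * int c \<le> int (fact (Suc k)) \<longleftrightarrow> a * c \<le> a * Suc (tz j)"
      unfolding wa aeq[symmetric] by (simp only: of_nat_mult[symmetric] of_nat_le_iff)
    also have "\<dots> \<longleftrightarrow> c \<le> Suc (tz j)" using a0 by (subst mult_le_cancel1) simp
    finally show "wb k j * int c \<le> int (fact (Suc k)) \<longleftrightarrow> c \<le> Suc (tz j)" .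
  qed
  moreover have "wb k j \<ge> 1" using a0 wa by simp
  ultimately show ?thesis by simp
qed

lemma WC_le:
  assumes "n = 2 ^ k"
  shows "WCmax n (wb k) C \<le> int (fact (Suc k)) \<longleftrightarrow> (\<forall>j\<in>{1..n}. C j \<le> Suc (tz j))"
proof -
  have ne: "{1..n} \<noteq> {}" using assms by simp
  have "WCmax n (wb k) C \<le> int (fact (Suc k)) \<longleftrightarrow> (\<forall>j\<in>{1..n}. wb k j * int (C j) \<le> int (fact (Suc k)))"
    unfolding WCmax_def using ne by (simp add: Max_le_iff)
  also have "\<dots> \<longleftrightarrow> (\<forall>j\<in>{1..n}. C j \<le> Suc (tz j))" using wb_props[OF assms] by auto
  finally show ?thesis .
qed

lemma force:
  assumes "n = 2 ^ k" "feasible_schedule n (Eb n) C" "\<forall>j\<in>{1..n}. C j \<le> Suc (tz j)"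
  shows "\<forall>j\<in>{1..n}. C j = Suc (tz j)"
proof -
  have "\<forall>j. j \<in> {1..n} \<longrightarrow> tz j = t \<longrightarrow> C j = Suc t" for t
  proof (induction t rule: less_induct)
    case (less t)
    show ?case
    proof (intro allI impI)
      fix j assume j: "j \<in> {1..n}" "tz j = t"
      have c1: "C j \<ge> 1" using conjunct1[OF assms(2)[unfolded feasible_schedule_def]] j(1) by (rule bspec)
      have c2: "C j \<le> Suc t" using assms(3) j by auto
      show "C j = Suc t"
      proof (rule ccontr)
        assume "C j \<noteq> Suc t"
        then have it: "C j - 1 < t" using c1 c2 by simp
        define i where "i = C j - 1"
        define c where "c = j - 2 ^ i"
        have jpos: "0 < j" "j \<le> 2 ^ k" using j assms(1) by auto
        have ch: "0 < c \<and> c < 2 ^ k \<and> tz c = i \<and> c + 2 ^ tz c = j"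
          unfolding c_def using child[OF jpos, of i] it j(2) unfolding i_def by simp
        have cn: "c \<in> {1..n}" using ch assms(1) by simp
        have it': "i < t" using it unfolding i_def .
        have tzc: "tz c = i" using ch by blast
        have "C c = Suc i" using less.IH[OF it'] cn tzc by blast
        then have eq: "C c = C j" using c1 i_def by simp
        have "par c = j" using ch unfolding par_def by blast
        then have "{c, j} \<in> Eb n" unfolding Eb_def using ch assms(1) by (intro image_eqI[where x=c]) auto
        moreover have "c \<noteq> j"
        proof -
          have "c + 2 ^ tz c = j" using ch by blast
          moreover have "(0::nat) < 2 ^ tz c" by simp
          ultimately show ?thesis by linarith
        qed
        ultimately show False using assms(2) eq unfolding feasible_schedule_def by (metis insertI1 insertI2 singletonI)
      qed
    qed
  qed
  then show ?thesis by blast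
qed

theorem lemma3:
  fixes k :: nat and n :: nat
  assumes "k \<ge> 1" and "n = 2 ^ k"
  shows "\<exists>(w :: nat \<Rightarrow> int) (E :: nat set set).
           simple_graph {1..n} E
           \<and> (\<forall>j\<in>{1..n}. w j \<ge> 1)
           \<and> treewidth {1..n} E = 1
           \<and> (\<exists>C. optimal_schedule n w E C)
           \<and> (\<forall>C. optimal_schedule n w E C \<longrightarrow> real (Cmax n C) = log 2 (real n) + 1)"
proof -
  define T where "T = int (fact (Suc k))"
  define C0 where "C0 = (\<lambda>j. Suc (tz j))"
  have ne: "{1..n} \<noteq> {}" using assms by simp
  have feas0: "feasible_schedule n (Eb n) C0"
    unfolding feasible_schedule_def
  proof (intro conjI ballI impI)
    fix e i j assume e: "e \<in> Eb n" and ij: "i \<in> e" "j \<in> e" "i \<noteq> j"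
    then obtain a where a: "a \<in> {1..<n}" "e = {a, par a}" unfolding Eb_def by auto
    have "tz a < tz (par a)" using par_props[of a k] a assms(2) by auto
    then show "C0 i \<noteq> C0 j" using ij a by (auto simp: C0_def)
  qed (simp add: C0_def)
  have "WCmax n (wb k) C0 \<le> T" using WC_le[OF assms(2)] by (simp add: C0_def T_def)
  have WC0: "WCmax n (wb k) C0 = T"
  proof -
    have "(\<lambda>j. wb k j * int (C0 j)) ` {1..n} = {T}"
    proof -
      have "\<forall>j\<in>{1..n}. wb k j * int (C0 j) = T"
      proof
        fix j assume j: "j \<in> {1..n}"
        have "tz j \<le> k" using tz_le_k[of j k] assms j by auto
        then have d: "Suc (tz j) dvd fact (Suc k)" by (intro dvd_fact) auto
        then show "wb k j * int (C0 j) = T" unfolding wb_def C0_def T_def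
          by (simp only: of_nat_mult[symmetric] dvd_div_mult_self)
      qed
      then show ?thesis using ne by auto
    qed
    then show ?thesis unfolding WCmax_def by simp
  qed
  have forced: "\<forall>j\<in>{1..n}. C j = C0 j" if "feasible_schedule n (Eb n) C" "WCmax n (wb k) C \<le> T" for C
    using force[OF assms(2) that(1)] WC_le[OF assms(2), of C] that(2) by (simp add: C0_def T_def)
  have opt0: "optimal_schedule n (wb k) (Eb n) C0"
    unfolding optimal_schedule_def
  proof (intro conjI allI impI)
    fix C' assume f: "feasible_schedule n (Eb n) C'"
    show "WCmax n (wb k) C0 \<le> WCmax n (wb k) C'"
    proof (rule ccontr)
      assume "\<not> ?thesis"
      then have lt: "WCmax n (wb k) C' < T" using WC0 by simp
      then have "\<forall>j\<in>{1..n}. C' j = C0 j" using forced f by simp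
      then have "WCmax n (wb k) C' = WCmax n (wb k) C0" unfolding WCmax_def
        by (metis (no_types, lifting) image_cong)
      then show False using lt WC0 by simp
    qed
  qed (rule feas0)
  have cm: "real (Cmax n C) = log 2 (real n) + 1" if "optimal_schedule n (wb k) (Eb n) C" for C
  proof -
    have "feasible_schedule n (Eb n) C" "WCmax n (wb k) C \<le> T"
      using that feas0 WC0 unfolding optimal_schedule_def by auto
    then have eqC: "\<forall>j\<in>{1..n}. C j = Suc (tz j)" using forced by (simp add: C0_def)
    have "Max (C ` {1..n}) = Suc k"
    proof (rule Max_eqI)
      fix y assume "y \<in> C ` {1..n}"
      then show "y \<le> Suc k" using eqC tz_le_k[of _ k] assms(2) by auto
    next
      have "tz n = k" using tz_mult[of 1 k] assms(2) by simp
      then show "Suc k \<in> C ` {1..n}" using eqC ne assms(2) by (intro image_eqI[of _ _ n]) auto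
    qed simp
    then show ?thesis unfolding Cmax_def using assms(2) by (simp add: log_nat_power)
  qed
  show ?thesis
    apply (rule exI[of _ "wb k"], rule exI[of _ "Eb n"])
    using Eb_simple[OF assms(2)] wb_props[OF assms(2)] Eb_treewidth[OF assms(2,1)] opt0 cm by blast
qed

end
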